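(* Let $\lambda_1,\lambda_2,\sigma_1,\sigma_2\in\mathbb{C}^*$ and $\eta_1,\eta_2\in\mathbb{C}$. Then $\Omega(\lambda_1,\eta_1,\sigma_1,0)\otimes\Omega(\lambda_2,\eta_2,\sigma_2,0)$ is an irreducible $\mathcal{G}$-module if and only if $\lambda_1\neq\lambda_2$.
   Context: The planar Galilean conformal algebra $\mathcal{G}$ is the complex Lie algebra with basis $\{L_m,H_m,I_m,J_m\mid m\in\mathbb{Z}\}$ and brackets $[L_m,L_n]=(n-m)L_{m+n}$, $[L_m,H_n]=nH_{m+n}$, $[L_m,I_n]=(n-m)I_{m+n}$, $[L_m,J_n]=(n-m)J_{m+n}$, $[H_m,I_n]=I_{m+n}$, $[H_m,J_n]=-J_{m+n}$, and $[H_m,H_n]=[I_m,I_n]=[J_m,J_n]=[I_m,J_n]=0$ for all $m,n\in\mathbb{Z}$. For $\lambda,\sigma\in\mathbb{C}^*$, $\eta\in\mathbb{C}$, the module $\Omega(\lambda,\eta,\sigma,0)$ is $\mathbb{C}[X,Y]$ with $L_m f(X,Y)=\lambda^m(Y-mX+m\eta)f(X,Y-m)$, $H_m f(X,Y)=\lambda^m X f(X,Y-m)$, $I_m f(X,Y)=\lambda^m\sigma f(X-1,Y-m)$, $J_m f(X,Y)=0$. The tensor product of $\mathcal{G}$-modules has action $x(v\otimes w)=xv\otimes w+v\otimes xw$. *)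

theory Defs
  imports Complex_Main "HOL-Computational_Algebra.Polynomial"
begin

text \<open>Basis elements of the planar Galilean conformal algebra.\<close>
datatype gen = L int | H int | I int | J int

text \<open>Two-variable polynomials f(X,Y) over a coefficient ring are 'a poly poly:
  the inner variable is X, the outer variable is Y.\<close>

definition shY :: "int \<Rightarrow> 'a::comm_ring_1 poly poly \<Rightarrow> 'a poly poly" where
  "shY m f = pcompose f [: - of_int m, 1 :]"

definition shX :: "'a::comm_ring_1 poly poly \<Rightarrow> 'a poly poly" where
  "shX f = map_poly (\<lambda>c. pcompose c [: -1, 1 :]) f"

definition varX :: "'a::comm_ring_1 poly poly" where "varX = [:[:0, 1:]:]"
definition varY :: "'a::comm_ring_1 poly poly" where "varY = [:0, 1:]"

text \<open>Action of the module Omega(lam,eta,sig,0) on C[X,Y], extended linearly over a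
  commutative coefficient ring 'a into which the complex scalars embed via \<iota>.
  With 'a = complex and \<iota> = id this is exactly the module of the paper.\<close>
definition omega_act ::
  "(complex \<Rightarrow> 'a::comm_ring_1) \<Rightarrow> complex \<Rightarrow> complex \<Rightarrow> complex \<Rightarrow> gen
     \<Rightarrow> 'a poly poly \<Rightarrow> 'a poly poly" where
  "omega_act \<iota> lam eta sig g f = (case g of
      L m \<Rightarrow> [:[:\<iota> (lam powi m):]:] * (varY - of_int m * varX + [:[:\<iota> (of_int m * eta):]:]) * shY m f
    | H m \<Rightarrow> [:[:\<iota> (lam powi m):]:] * varX * shY m f
    | I m \<Rightarrow> [:[:\<iota> (lam powi m * sig):]:] * shY m (shX f)
    | J m \<Rightarrow> 0)"

text \<open>The tensor product C[X1,Y1] (x) C[X2,Y2], identified with C[X1,Y1,X2,Y2] =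
  complex poly poly poly poly (variables from innermost: X1, Y1, X2, Y2).
  x (f (x) g) = x f (x) g + f (x) x g.\<close>
definition tensor_act ::
  "complex \<Rightarrow> complex \<Rightarrow> complex \<Rightarrow> complex \<Rightarrow> complex \<Rightarrow> complex \<Rightarrow> gen
     \<Rightarrow> complex poly poly poly poly \<Rightarrow> complex poly poly poly poly" where
  "tensor_act lam1 eta1 sig1 lam2 eta2 sig2 g F =
     map_poly (map_poly (omega_act id lam1 eta1 sig1 g)) F
     + omega_act (\<lambda>c. [:[:c:]:]) lam2 eta2 sig2 g F"

text \<open>Submodules and irreducibility for a module structure on a ring 'v containing C
  via emb (scalar multiplication = multiplication by emb c).\<close>
definition is_submodule :: "(gen \<Rightarrow> 'v \<Rightarrow> 'v) \<Rightarrow> (complex \<Rightarrow> 'v::comm_ring_1) \<Rightarrow> 'v set \<Rightarrow> bool" where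
  "is_submodule act emb W \<longleftrightarrow>
     0 \<in> W \<and> (\<forall>x\<in>W. \<forall>y\<in>W. x + y \<in> W) \<and> (\<forall>c. \<forall>x\<in>W. emb c * x \<in> W)
     \<and> (\<forall>g. \<forall>x\<in>W. act g x \<in> W)"

definition irreducible_module :: "(gen \<Rightarrow> 'v \<Rightarrow> 'v) \<Rightarrow> (complex \<Rightarrow> 'v::comm_ring_1) \<Rightarrow> bool" where
  "irreducible_module act emb \<longleftrightarrow>
     (UNIV :: 'v set) \<noteq> {0} \<and> (\<forall>W. is_submodule act emb W \<longrightarrow> W = {0} \<or> W = UNIV)"

end

theory Submission
  imports Defs
begin

definition rh :: "('a::comm_ring_1 \<Rightarrow> 'b::comm_ring_1) \<Rightarrow> bool" where
 "rh f \<longleftrightarrow> f 0 = 0 \<and> f 1 = 1 \<and> (\<forall>x y. f (x + y) = f x + f y) \<and> (\<forall>x y. f (x*y) = f x * f y)"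

lemma rhD: assumes "rh f" shows "f 0 = 0" "f 1 = 1" "f (x + y) = f x + f y" "f (x * y) = f x * f y"
  using assms unfolding rh_def by auto

lemma rh_uminus: assumes "rh f" shows "f (- x) = - f x"
proof -
  have "f (- x) + f x = 0" using rhD(3)[OF assms, of "-x" x] rhD(1)[OF assms] by simp
  thus ?thesis by (simp add: eq_neg_iff_add_eq_0)
qed

lemma rh_diff: assumes "rh f" shows "f (x - y) = f x - f y"
  using rhD(3)[OF assms, of x "-y"] rh_uminus[OF assms, of y] by simp

lemma rh_of_nat: assumes "rh f" shows "f (of_nat n) = of_nat n"
  by (induction n) (simp_all add: rhD[OF assms])

lemma rh_of_int: assumes "rh f" shows "f (of_int k) = of_int k"
proof (cases "k \<ge> 0")
  case True
  then obtain n where "k = int n" by (metis nonneg_eq_int)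
  then show ?thesis by (simp add: rh_of_nat[OF assms])
next
  case False
  then have "-k \<ge> 0" by simp
  then obtain n where "-k = int n" by (metis nonneg_eq_int)
  then have "k = - int n" by simp
  then show ?thesis by (simp add: rh_of_nat[OF assms] rh_uminus[OF assms])
qed

lemma map_poly_add_gen:
  assumes "f 0 = 0" "\<And>x y. f (x + y) = f x + f y"
  shows "map_poly f (p + q) = map_poly f p + map_poly f q"
  by (intro poly_eqI) (simp add: coeff_map_poly assms)

lemma map_poly_const: "f 0 = 0 \<Longrightarrow> map_poly f [:a:] = [:f a:]"
  by (simp add: map_poly_pCons)

lemma map_poly_mult_gen:
  assumes "rh f"
  shows "map_poly f (p * q) = map_poly f p * map_poly f q"
proof (induction p)
  case 0 then show ?case by simp
next
  case (pCons a p)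
  have f0: "f 0 = 0" using rhD[OF assms] by simp
  have "map_poly f (pCons a p * q) = map_poly f (smult a q + pCons 0 (p * q))"
    by (simp add: mult_pCons_left)
  also have "\<dots> = smult (f a) (map_poly f q) + pCons 0 (map_poly f p * map_poly f q)"
  proof -
    have "map_poly f (smult a q) = smult (f a) (map_poly f q)"
      by (rule map_poly_smult) (simp_all add: rhD[OF assms])
    moreover have "map_poly f (pCons 0 (p * q)) = pCons 0 (map_poly f p * map_poly f q)"
      by (simp add: map_poly_pCons f0 pCons.IH)
    ultimately show ?thesis
      by (simp add: map_poly_add_gen[of f, OF f0 rhD(3)[OF assms]])
  qed
  also have "\<dots> = map_poly f (pCons a p) * map_poly f q"
    by (simp add: map_poly_pCons f0 mult_pCons_left)
  finally show ?case .
qed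

lemma rh_map_poly: assumes "rh f" shows "rh (map_poly f)"
  unfolding rh_def using rhD[OF assms]
  by (auto simp: map_poly_add_gen map_poly_mult_gen[OF assms])

lemma rh_pcompose: "rh (\<lambda>p. pcompose p q)"
  unfolding rh_def by (simp add: pcompose_add pcompose_mult pcompose_1)

lemma rh_id: "rh (\<lambda>x. x)" unfolding rh_def by simp

lemma rh_comp: "rh f \<Longrightarrow> rh g \<Longrightarrow> rh (\<lambda>x. f (g x))"
  unfolding rh_def by simp

lemma map_poly_pcompose_gen:
  assumes "rh f"
  shows "map_poly f (pcompose p q) = pcompose (map_poly f p) (map_poly f q)"
proof (induction p)
  case 0 then show ?case by simp
next
  case (pCons a p)
  have f0: "f 0 = 0" using rhD[OF assms] by simp
  show ?case
    by (simp add: pcompose_pCons map_poly_pCons f0 map_poly_add_gen rhD[OF assms]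
          map_poly_mult_gen[OF assms] pCons.IH map_poly_const)
qed

definition shc :: "'a::comm_ring_1 \<Rightarrow> 'a poly \<Rightarrow> 'a poly" where
  "shc c p = pcompose p [:c, 1:]"

lemma rh_shc: "rh (shc c)"
  unfolding shc_def using rh_pcompose by (metis (no_types))

lemma shc_shc: "shc a (shc b p) = shc (b + a) p"
  unfolding shc_def by (simp add: pcompose_assoc[symmetric] pcompose_pCons)

lemma shc_0: "shc 0 p = p" unfolding shc_def by simp

lemma shc_0_fun: "shc 0 = (\<lambda>p. p)" by (rule ext) (rule shc_0)

lemma shc_shc_fun: "(\<lambda>x. shc a (shc b x)) = shc (b + a)" by (rule ext) (rule shc_shc)

lemma shc_const[simp]: "shc c [:a:] = [:a:]" unfolding shc_def by simp

lemma shc_var: "shc c [:0,1:] = [:0,1:] + [:c:]"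
  unfolding shc_def by (simp add: pcompose_pCons)

lemma map_poly_shc:
  assumes "rh f"
  shows "map_poly f (shc (of_int k) p) = shc (of_int k) (map_poly f p)"
  unfolding shc_def
  by (simp add: map_poly_pcompose_gen[OF assms] map_poly_pCons rhD[OF assms] rh_of_int[OF assms])

definition nilp :: "('a::zero \<Rightarrow> 'a) \<Rightarrow> 'a \<Rightarrow> bool" where
  "nilp D x \<longleftrightarrow> (\<exists>N. (D ^^ N) x = 0)"

lemma funpow_fix0: fixes D :: "'a::zero \<Rightarrow> 'a" shows "D 0 = 0 \<Longrightarrow> (D ^^ n) 0 = 0"
  by (induction n) simp_all

lemma funpow_zero_mono:
  fixes D :: "'a::zero \<Rightarrow> 'a"
  assumes "D 0 = 0" "(D ^^ N) x = 0" "N \<le> M" shows "(D ^^ M) x = 0"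
proof -
  obtain k where "M = k + N" using assms(3) le_Suc_ex by (metis add.commute)
  then show ?thesis using assms by (simp add: funpow_add funpow_fix0)
qed

lemma shc_nil:
  fixes p :: "'a::idom poly"
  shows "((\<lambda>q. shc c q - q) ^^ Suc (degree p)) p = 0"
proof (induction "degree p" arbitrary: p rule: less_induct)
  case less
  define D where "D = (\<lambda>q::'a poly. shc c q - q)"
  have D0: "D 0 = 0" unfolding D_def shc_def by simp
  show ?case
  proof (cases "degree p = 0")
    case True
    then obtain a where "p = [:a:]" by (metis degree_eq_zeroE)
    then show ?thesis unfolding D_def[symmetric] by (simp add: D_def)
  next
    case False
    have dsh: "degree (shc c p) = degree p" unfolding shc_def by (simp add: degree_pcompose)
    have lsh: "lead_coeff (shc c p) = lead_coeff p" unfolding shc_def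
      by (simp add: lead_coeff_comp)
    have "degree (D p) \<le> degree p" unfolding D_def using dsh
      by (metis degree_diff_le order_refl)
    moreover have "coeff (D p) (degree p) = 0" unfolding D_def using dsh lsh by simp
    ultimately have lt: "degree (D p) < degree p"
      using False by (metis leading_coeff_0_iff degree_0 le_neq_implies_less neq0_conv)
    have "(D ^^ Suc (degree (D p))) (D p) = 0" using less[OF lt] unfolding D_def by simp
    then have "(D ^^ degree p) (D p) = 0"
      using funpow_zero_mono[of D, OF D0] lt by (metis Suc_leI)
    then show ?thesis unfolding D_def[symmetric] by (simp add: funpow_Suc_right del: funpow.simps)
  qed
qed

lemma map_poly_funpow:
  fixes f :: "'a::zero \<Rightarrow> 'a"
  assumes "f 0 = 0" shows "(map_poly f ^^ n) p = map_poly (f ^^ n) p"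
proof (induction n arbitrary: p)
  case 0 then show ?case by simp
next
  case (Suc n)
  have "(f ^^ n) 0 = 0" using funpow_fix0[of f, OF assms] .
  then show ?case using Suc by (simp add: map_poly_map_poly assms o_def)
qed

lemma nilp_lift:
  fixes f :: "'a::zero \<Rightarrow> 'a"
  assumes f0: "f 0 = 0" and nf: "\<And>c. nilp f c"
  shows "nilp (map_poly f) p"
proof (induction p)
  case 0 then show ?case unfolding nilp_def by (intro exI[of _ 0]) simp
next
  case (pCons a p)
  obtain N1 where N1: "(f ^^ N1) a = 0" using nf unfolding nilp_def by blast
  obtain N2 where N2: "(map_poly f ^^ N2) p = 0" using pCons.IH unfolding nilp_def by blast
  define N where "N = max N1 N2"
  have fN0: "(f ^^ N) 0 = 0" using funpow_fix0[of f, OF f0] .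
  have a0: "(f ^^ N) a = 0" using funpow_zero_mono[OF f0 N1] unfolding N_def by simp
  have "(map_poly f ^^ N) p = 0" using funpow_zero_mono[of "map_poly f", OF _ N2] unfolding N_def by simp
  then have p0: "map_poly (f ^^ N) p = 0" by (simp add: map_poly_funpow[of f, OF f0])
  have "(map_poly f ^^ N) (pCons a p) = 0"
    by (simp add: map_poly_funpow[of f, OF f0] map_poly_pCons[of "f ^^ N", OF fN0] a0 p0)
  then show ?case unfolding nilp_def by blast
qed

lemma map_poly_diff_id:
  assumes "f 0 = 0" shows "map_poly f p - p = map_poly (\<lambda>x. f x - x) p"
  by (intro poly_eqI) (simp add: coeff_map_poly assms)

lemma shc_nilp: "nilp (\<lambda>q. shc c q - q) (p::'a::idom poly)"
  unfolding nilp_def using shc_nil by blast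

lemma shc_zero[simp]: "shc c 0 = 0" unfolding shc_def by simp

lemma G7:
  fixes p :: "'a::{idom,ring_char_0} poly"
  assumes "shc (-1) p = p"
  shows "p = [:coeff p 0:]"
proof -
  have step: "poly p (x - 1) = poly p x" for x
    using arg_cong[OF assms, of "\<lambda>q. poly q x"] unfolding shc_def by (simp add: poly_pcompose)
  have all: "poly p (- of_nat n) = poly p 0" for n
  proof (induction n)
    case 0 then show ?case by simp
  next
    case (Suc n)
    have "(- of_nat (Suc n) :: 'a) = - of_nat n - 1" by simp
    then have "poly p (- of_nat (Suc n)) = poly p (- of_nat n - 1)" by (simp only:)
    also have "\<dots> = poly p (- of_nat n)" by (rule step)
    finally show ?case using Suc by simp
  qed
  define q where "q = p - [:poly p 0:]"
  have sub: "range (\<lambda>n::nat. - of_nat n :: 'a) \<subseteq> {x. poly q x = 0}"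
    using all unfolding q_def by auto
  have "infinite (range (\<lambda>n::nat. - of_nat n :: 'a))"
    by (rule range_inj_infinite) (simp add: inj_on_def)
  then have "infinite {x. poly q x = 0}" using sub finite_subset by blast
  then have "q = 0" using poly_roots_finite by blast
  then show ?thesis unfolding q_def by (simp add: poly_0_coeff_0)
qed

type_synonym C1 = "complex poly"
type_synonym C2 = "C1 poly"
type_synonym C3 = "C2 poly"
type_synonym MM = "C3 poly"

definition sx1 :: "int \<Rightarrow> MM \<Rightarrow> MM" where "sx1 k = map_poly (map_poly (map_poly (shc (of_int k))))"
definition sy1 :: "int \<Rightarrow> MM \<Rightarrow> MM" where "sy1 k = map_poly (map_poly (shc (of_int k)))"
definition sx2 :: "int \<Rightarrow> MM \<Rightarrow> MM" where "sx2 k = map_poly (shc (of_int k))"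
definition sy2 :: "int \<Rightarrow> MM \<Rightarrow> MM" where "sy2 k = shc (of_int k)"

definition ee :: "complex \<Rightarrow> MM" where "ee c = [:[:[:[:c:]:]:]:]"
definition X1M :: MM where "X1M = [:[:[:[:0,1:]:]:]:]"
definition Y1M :: MM where "Y1M = [:[:[:0,1:]:]:]"
definition X2M :: MM where "X2M = [:[:0,1:]:]"
definition Y2M :: MM where "Y2M = [:0,1:]"

lemma cpoly_add: "[:a + b:] = [:a:] + [:b:]" by simp
lemma cpoly_mult: "[:(a::'a::comm_ring_1) * b:] = [:a:] * [:b:]" by simp
lemma cpoly_diff: "[:a - b:] = [:a:] - [:b:]" by (simp add: poly_eq_iff)
lemma cpoly_uminus: "[:- a:] = - [:a:]" by simp

lemma ee_add: "ee (a + b) = ee a + ee b" unfolding ee_def by simp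
lemma ee_mult: "ee (a * b) = ee a * ee b" unfolding ee_def by simp
lemma ee_0[simp]: "ee 0 = 0" unfolding ee_def by simp
lemma ee_1[simp]: "ee 1 = 1" unfolding ee_def by (simp add: one_pCons)
lemma ee_uminus: "ee (- a) = - ee a" unfolding ee_def by simp
lemma ee_diff: "ee (a - b) = ee a - ee b"
  using ee_add[of a "-b"] ee_uminus[of b] by simp
lemma ee_of_int: "ee (of_int k) = of_int k" unfolding ee_def by (simp add: of_int_poly[symmetric])
lemma ee_of_nat: "ee (of_nat k) = of_nat k" unfolding ee_def by (simp add: of_nat_poly[symmetric])
lemma ee_power: "ee (a ^ n) = ee a ^ n" by (induction n) (simp_all add: ee_mult)
lemma ee_inj: "ee a = 0 \<longleftrightarrow> a = 0" unfolding ee_def by simp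

lemma rh_sx1: "rh (sx1 k)" unfolding sx1_def by (intro rh_map_poly rh_shc)
lemma rh_sy1: "rh (sy1 k)" unfolding sy1_def by (intro rh_map_poly rh_shc)
lemma rh_sx2: "rh (sx2 k)" unfolding sx2_def by (intro rh_map_poly rh_shc)
lemma rh_sy2: "rh (sy2 k)" unfolding sy2_def by (rule rh_shc)

lemma shc_of_int_comp: "shc (of_int k) \<circ> shc (of_int l) = shc (of_int (k + l))"
  by (rule ext) (simp add: shc_shc add.commute)

lemma mp0: "rh f \<Longrightarrow> f 0 = 0" by (rule rhD(1))

lemma sx1_sx1: "sx1 k (sx1 l F) = sx1 (k + l) F"
  unfolding sx1_def
  by (simp add: map_poly_map_poly mp0 rh_shc rh_map_poly shc_shc o_def add.commute)
lemma sy1_sy1: "sy1 k (sy1 l F) = sy1 (k + l) F"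
  unfolding sy1_def
  by (simp add: map_poly_map_poly mp0 rh_shc rh_map_poly shc_shc o_def add.commute)
lemma sx2_sx2: "sx2 k (sx2 l F) = sx2 (k + l) F"
  unfolding sx2_def
  by (simp add: map_poly_map_poly mp0 rh_shc rh_map_poly shc_shc o_def add.commute)
lemma sy2_sy2: "sy2 k (sy2 l F) = sy2 (k + l) F"
  unfolding sy2_def by (simp add: shc_shc add.commute)

lemma map_poly_id_fun: "map_poly (\<lambda>x. x) = (\<lambda>x. x)" by (rule ext) simp

lemma sx1_0: "sx1 0 F = F" unfolding sx1_def by (simp add: shc_0_fun map_poly_id_fun)
lemma sy1_0: "sy1 0 F = F" unfolding sy1_def by (simp add: shc_0_fun map_poly_id_fun)
lemma sx2_0: "sx2 0 F = F" unfolding sx2_def by (simp add: shc_0_fun map_poly_id_fun)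
lemma sy2_0: "sy2 0 F = F" unfolding sy2_def by (simp add: shc_0_fun map_poly_id_fun)

lemma rh_shc_map: "rh (map_poly (shc c))" by (intro rh_map_poly rh_shc)
lemma rh_shc_map2: "rh (map_poly (map_poly (shc c)))" by (intro rh_map_poly rh_shc)

lemma com_y2x2: "sy2 k (sx2 l F) = sx2 l (sy2 k F)"
  unfolding sy2_def sx2_def by (simp add: map_poly_shc[OF rh_shc])
lemma com_y2y1: "sy2 k (sy1 l F) = sy1 l (sy2 k F)"
  unfolding sy2_def sy1_def by (simp add: map_poly_shc[OF rh_shc_map])
lemma com_y2x1: "sy2 k (sx1 l F) = sx1 l (sy2 k F)"
  unfolding sy2_def sx1_def by (simp add: map_poly_shc[OF rh_shc_map2])
lemma shc_one[simp]: "shc c 1 = 1" unfolding shc_def by (simp add: pcompose_1)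

lemma mshc: "shc (of_int k) (map_poly f x) = map_poly f (shc (of_int k) x)" if "rh f"
  using map_poly_shc[OF that] by simp

lemma com_x2y1: "sx2 k (sy1 l F) = sy1 l (sx2 k F)"
  unfolding sx2_def sy1_def
  by (simp add: map_poly_map_poly mp0 rh_shc rh_shc_map o_def mshc[OF rh_shc])
lemma com_x2x1: "sx2 k (sx1 l F) = sx1 l (sx2 k F)"
  unfolding sx2_def sx1_def
  by (simp add: map_poly_map_poly mp0 rh_shc rh_shc_map rh_shc_map2 o_def mshc[OF rh_shc_map])
lemma com_y1x1: "sy1 k (sx1 l F) = sx1 l (sy1 k F)"
  unfolding sy1_def sx1_def
  by (simp add: map_poly_map_poly mp0 rh_shc rh_shc_map rh_shc_map2 o_def mshc[OF rh_shc])

lemma sx1_inj: "sx1 k G = 0 \<Longrightarrow> G = 0"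
  using sx1_sx1[of "-k" k G] sx1_0[of G] rhD(1)[OF rh_sx1] by simp
lemma sx2_inj: "sx2 k G = 0 \<Longrightarrow> G = 0"
  using sx2_sx2[of "-k" k G] sx2_0[of G] rhD(1)[OF rh_sx2] by simp

lemma diff_fun1: "f 0 = 0 \<Longrightarrow> (\<lambda>G. map_poly f G - G) = map_poly (\<lambda>x. f x - x)"
  by (rule ext) (rule map_poly_diff_id)

lemma nil_sy2: "nilp (\<lambda>G. sy2 k G - G) G"
  unfolding sy2_def by (rule shc_nilp)
lemma nil_sx2: "nilp (\<lambda>G. sx2 k G - G) G"
  unfolding sx2_def diff_fun1[of "shc (of_int k)", OF shc_zero]
  by (rule nilp_lift) (simp_all add: shc_nilp)
lemma nil_sy1: "nilp (\<lambda>G. sy1 k G - G) G"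
proof -
  have "(\<lambda>G. sy1 k G - G) = map_poly (map_poly (\<lambda>x. shc (of_int k) x - x))"
    unfolding sy1_def diff_fun1[of "map_poly (shc (of_int k))", OF map_poly_0]
    by (simp add: diff_fun1[of "shc (of_int k)", OF shc_zero])
  then show ?thesis
    by (simp add: nilp_lift shc_nilp)
qed
lemma nil_sx1: "nilp (\<lambda>G. sx1 k G - G) G"
proof -
  have "(\<lambda>G. sx1 k G - G) = map_poly (map_poly (map_poly (\<lambda>x. shc (of_int k) x - x)))"
    unfolding sx1_def diff_fun1[of "map_poly (map_poly (shc (of_int k)))", OF map_poly_0]
    by (simp add: diff_fun1[of "shc (of_int k)", OF shc_zero] diff_fun1[of "map_poly (shc (of_int k))", OF map_poly_0])
  then show ?thesis
    by (simp add: nilp_lift shc_nilp)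
qed

lemma sx1_ee[simp]: "sx1 k (ee c) = ee c" unfolding sx1_def ee_def by (simp add: map_poly_pCons)
lemma sy1_ee[simp]: "sy1 k (ee c) = ee c" unfolding sy1_def ee_def by (simp add: map_poly_pCons)
lemma sx2_ee[simp]: "sx2 k (ee c) = ee c" unfolding sx2_def ee_def by (simp add: map_poly_pCons)
lemma sy2_ee[simp]: "sy2 k (ee c) = ee c" unfolding sy2_def ee_def by (simp add: map_poly_pCons)

lemma oi1: "[:of_int k:] = of_int k" by (simp add: of_int_poly)

lemma sx1_X1[simp]: "sx1 k X1M = X1M + of_int k" unfolding sx1_def X1M_def
  by (simp add: map_poly_pCons shc_var of_int_poly)
lemma sx1_Y1[simp]: "sx1 k Y1M = Y1M" unfolding sx1_def Y1M_def by (simp add: map_poly_pCons)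
lemma sx1_X2[simp]: "sx1 k X2M = X2M" unfolding sx1_def X2M_def by (simp add: map_poly_pCons)
lemma sx1_Y2[simp]: "sx1 k Y2M = Y2M" unfolding sx1_def Y2M_def by (simp add: map_poly_pCons)
lemma sy1_X1[simp]: "sy1 k X1M = X1M" unfolding sy1_def X1M_def by (simp add: map_poly_pCons)
lemma sy1_Y1[simp]: "sy1 k Y1M = Y1M + of_int k" unfolding sy1_def Y1M_def
  by (simp add: map_poly_pCons shc_var of_int_poly)
lemma sy1_X2[simp]: "sy1 k X2M = X2M" unfolding sy1_def X2M_def by (simp add: map_poly_pCons)
lemma sy1_Y2[simp]: "sy1 k Y2M = Y2M" unfolding sy1_def Y2M_def by (simp add: map_poly_pCons)
lemma sx2_X1[simp]: "sx2 k X1M = X1M" unfolding sx2_def X1M_def by (simp add: map_poly_pCons)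
lemma sx2_Y1[simp]: "sx2 k Y1M = Y1M" unfolding sx2_def Y1M_def by (simp add: map_poly_pCons)
lemma sx2_X2[simp]: "sx2 k X2M = X2M + of_int k" unfolding sx2_def X2M_def
  by (simp add: map_poly_pCons shc_var of_int_poly)
lemma sx2_Y2[simp]: "sx2 k Y2M = Y2M" unfolding sx2_def Y2M_def by (simp add: map_poly_pCons)
lemma sy2_X1[simp]: "sy2 k X1M = X1M" unfolding sy2_def X1M_def by simp
lemma sy2_Y1[simp]: "sy2 k Y1M = Y1M" unfolding sy2_def Y1M_def by simp
lemma sy2_X2[simp]: "sy2 k X2M = X2M" unfolding sy2_def X2M_def by simp
lemma sy2_Y2[simp]: "sy2 k Y2M = Y2M + of_int k" unfolding sy2_def Y2M_def
  by (simp add: shc_var of_int_poly)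

lemma map_poly_cmult:
  assumes "g 0 = 0" shows "map_poly (\<lambda>x. a * g x) p = [:a:] * map_poly g p"
  by (intro poly_eqI) (simp add: coeff_map_poly assms)

lemma map_poly_zero_fun: "map_poly (\<lambda>x. 0) p = 0"
  by (intro poly_eqI) (simp add: coeff_map_poly)

lemma shY_fun: "shY m = shc (of_int (-m))"
  by (rule ext) (simp add: shY_def shc_def)

lemma shc_fun: "shc c = (\<lambda>p. pcompose p [:c, 1:])"
  by (rule ext) (simp add: shc_def)

lemma shX_fun: "shX = map_poly (shc (of_int (-1)))"
  by (rule ext) (simp add: shX_def shc_fun)

lemma map_poly_zero_fun2: "map_poly (\<lambda>x. 0) = (\<lambda>x. 0)"
  by (rule ext) (rule map_poly_zero_fun)

definition lift2 :: "C2 \<Rightarrow> MM" where "lift2 x = [:[:x:]:]"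

lemma rh_lift2: "rh lift2"
  unfolding rh_def lift2_def by (simp add: one_pCons)

lemma map2_cmult:
  assumes "g 0 = 0"
  shows "map_poly (map_poly (\<lambda>x. a * g x)) (F::MM) = lift2 a * map_poly (map_poly g) F"
proof -
  have "map_poly (\<lambda>x. a * g x) = (\<lambda>d. [:a:] * map_poly g d)"
    by (rule ext) (rule map_poly_cmult[of g, OF assms])
  then show ?thesis unfolding lift2_def
    by (simp only:) (rule map_poly_cmult, simp)
qed

lemma T_H: "tensor_act l1 e1 s1 l2 e2 s2 (H m) F =
   ee (l1 powi m) * X1M * sy1 (-m) F + ee (l2 powi m) * X2M * sy2 (-m) F"
proof -
  have 1: "map_poly (map_poly (omega_act id l1 e1 s1 (H m))) F
      = lift2 ([:[:l1 powi m:]:] * varX) * sy1 (-m) F"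
  proof -
    have f: "omega_act id l1 e1 s1 (H m) = (\<lambda>f. ([:[:l1 powi m:]:] * varX) * shc (of_int (-m)) f)"
      by (rule ext) (simp add: omega_act_def shY_fun)
    show ?thesis unfolding f sy1_def by (rule map2_cmult) simp
  qed
  have 2: "lift2 ([:[:l1 powi m:]:] * varX) = ee (l1 powi m) * X1M"
    unfolding lift2_def ee_def X1M_def varX_def by simp
  have 3: "omega_act (\<lambda>c. [:[:c:]:]) l2 e2 s2 (H m) F = ee (l2 powi m) * X2M * sy2 (-m) F"
    unfolding omega_act_def sy2_def ee_def X2M_def varX_def by (simp add: shY_fun)
  show ?thesis unfolding tensor_act_def 1 2 3 ..
qed

lemma T_L: "tensor_act l1 e1 s1 l2 e2 s2 (L m) F =
   ee (l1 powi m) * (Y1M - of_int m * X1M + ee (of_int m * e1)) * sy1 (-m) F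
 + ee (l2 powi m) * (Y2M - of_int m * X2M + ee (of_int m * e2)) * sy2 (-m) F"
proof -
  have 1: "map_poly (map_poly (omega_act id l1 e1 s1 (L m))) F
      = lift2 ([:[:l1 powi m:]:] * (varY - of_int m * varX + [:[:of_int m * e1:]:])) * sy1 (-m) F"
  proof -
    have f: "omega_act id l1 e1 s1 (L m) = (\<lambda>f. ([:[:l1 powi m:]:] * (varY - of_int m * varX + [:[:of_int m * e1:]:])) * shc (of_int (-m)) f)"
      by (rule ext) (simp add: omega_act_def shY_fun)
    show ?thesis unfolding f sy1_def by (rule map2_cmult) simp
  qed
  have 2: "lift2 ([:[:l1 powi m:]:] * (varY - of_int m * varX + [:[:of_int m * e1:]:]))
     = ee (l1 powi m) * (Y1M - of_int m * X1M + ee (of_int m * e1))"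
  proof -
    have a: "lift2 [:[:c:]:] = ee c" for c unfolding lift2_def ee_def ..
    have b: "lift2 varY = Y1M" "lift2 varX = X1M" unfolding lift2_def Y1M_def X1M_def varX_def varY_def by simp_all
    show ?thesis
      by (simp only: rhD[OF rh_lift2] rh_diff[OF rh_lift2] rh_of_int[OF rh_lift2] a b)
  qed
  have 3: "omega_act (\<lambda>c. [:[:c:]:]) l2 e2 s2 (L m) F
     = ee (l2 powi m) * (Y2M - of_int m * X2M + ee (of_int m * e2)) * sy2 (-m) F"
    unfolding omega_act_def sy2_def ee_def X2M_def Y2M_def varX_def varY_def by (simp add: shY_fun)
  show ?thesis unfolding tensor_act_def 1 2 3 ..
qed

lemma T_I: "tensor_act l1 e1 s1 l2 e2 s2 (I m) F =
   ee (l1 powi m * s1) * sy1 (-m) (sx1 (-1) F) + ee (l2 powi m * s2) * sy2 (-m) (sx2 (-1) F)"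
proof -
  have a: "map_poly (map_poly (\<lambda>f. shY m (shX f))) F = sy1 (-m) (sx1 (-1) F)"
    unfolding sy1_def sx1_def shY_fun shX_fun
    by (simp add: map_poly_map_poly mp0 rh_shc rh_shc_map rh_shc_map2 o_def)
  have 1: "map_poly (map_poly (omega_act id l1 e1 s1 (I m))) F
      = lift2 [:[:l1 powi m * s1:]:] * sy1 (-m) (sx1 (-1) F)"
  proof -
    have f: "omega_act id l1 e1 s1 (I m) = (\<lambda>f. [:[:l1 powi m * s1:]:] * shY m (shX f))"
      by (rule ext) (simp add: omega_act_def)
    show ?thesis unfolding f a[symmetric] by (rule map2_cmult) (simp add: shY_def shX_def)
  qed
  have 2: "lift2 [:[:l1 powi m * s1:]:] = ee (l1 powi m * s1)"
    unfolding lift2_def ee_def by simp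
  have 3: "omega_act (\<lambda>c. [:[:c:]:]) l2 e2 s2 (I m) F = ee (l2 powi m * s2) * sy2 (-m) (sx2 (-1) F)"
    unfolding omega_act_def sy2_def sx2_def ee_def by (simp add: shY_fun shX_fun)
  show ?thesis unfolding tensor_act_def 1 2 3 ..
qed

lemma T_J: "tensor_act l1 e1 s1 l2 e2 s2 (J m) F = 0"
  unfolding tensor_act_def omega_act_def by (simp add: map_poly_zero_fun2)

definition dlt :: "(nat \<Rightarrow> 'a::ab_group_add) \<Rightarrow> nat \<Rightarrow> 'a" where
  "dlt A = (\<lambda>m. A (Suc m) - A m)"

definition pol :: "(nat \<Rightarrow> 'a::ab_group_add) \<Rightarrow> bool" where
  "pol A \<longleftrightarrow> (\<exists>N. (dlt ^^ N) A = (\<lambda>_. 0))"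

lemma dltN_add: "(dlt ^^ n) (\<lambda>m. A m + B m) = (\<lambda>m. (dlt ^^ n) A m + (dlt ^^ n) B m)"
  by (induction n) (simp_all add: dlt_def algebra_simps)

lemma dltN_diff: "(dlt ^^ n) (\<lambda>m. A m - B m) = (\<lambda>m. (dlt ^^ n) A m - (dlt ^^ n) B m)"
  by (induction n) (simp_all add: dlt_def algebra_simps)

lemma dltN_cmult: "(dlt ^^ n) (\<lambda>m. (c::'a::comm_ring_1) * A m) = (\<lambda>m. c * (dlt ^^ n) A m)"
  by (induction n) (simp_all add: dlt_def algebra_simps)

lemma dltN_zero: "(dlt ^^ n) (\<lambda>m. 0::'a::ab_group_add) = (\<lambda>m. 0)"
  by (induction n) (simp_all add: dlt_def)

lemma dltN_shift: "(dlt ^^ n) (\<lambda>m. A (Suc m)) = (\<lambda>m. (dlt ^^ n) A (Suc m))"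
  by (induction n) (simp_all add: dlt_def)

lemma dltN_mono:
  assumes "(dlt ^^ N) A = (\<lambda>_. 0::'a::ab_group_add)" "N \<le> M"
  shows "(dlt ^^ M) A = (\<lambda>_. 0)"
proof -
  obtain k where "M = k + N" using assms(2) le_Suc_ex by (metis add.commute)
  then show ?thesis using assms(1) by (simp add: funpow_add dltN_zero)
qed

lemma pol_add: "pol A \<Longrightarrow> pol B \<Longrightarrow> pol (\<lambda>m. A m + B m)"
  unfolding pol_def
proof (elim exE)
  fix N1 N2 assume a: "(dlt ^^ N1) A = (\<lambda>_. 0)" and b: "(dlt ^^ N2) B = (\<lambda>_. 0)"
  have "(dlt ^^ max N1 N2) A = (\<lambda>_. 0)" "(dlt ^^ max N1 N2) B = (\<lambda>_. 0)"
    using dltN_mono[OF a] dltN_mono[OF b] by simp_all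
  then have "(dlt ^^ max N1 N2) (\<lambda>m. A m + B m) = (\<lambda>_. 0)" by (simp add: dltN_add)
  then show "\<exists>N. (dlt ^^ N) (\<lambda>m. A m + B m) = (\<lambda>_. 0)" by blast
qed

lemma pol_diff: "pol A \<Longrightarrow> pol B \<Longrightarrow> pol (\<lambda>m. A m - B m)"
  unfolding pol_def
proof (elim exE)
  fix N1 N2 assume a: "(dlt ^^ N1) A = (\<lambda>_. 0)" and b: "(dlt ^^ N2) B = (\<lambda>_. 0)"
  have "(dlt ^^ max N1 N2) A = (\<lambda>_. 0)" "(dlt ^^ max N1 N2) B = (\<lambda>_. 0)"
    using dltN_mono[OF a] dltN_mono[OF b] by simp_all
  then have "(dlt ^^ max N1 N2) (\<lambda>m. A m - B m) = (\<lambda>_. 0)" by (simp add: dltN_diff)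
  then show "\<exists>N. (dlt ^^ N) (\<lambda>m. A m - B m) = (\<lambda>_. 0)" by blast
qed

lemma pol_cmult: "pol A \<Longrightarrow> pol (\<lambda>m. (c::'a::comm_ring_1) * A m)"
  unfolding pol_def
proof (elim exE)
  fix N assume a: "(dlt ^^ N) A = (\<lambda>_. 0)"
  then have "(dlt ^^ N) (\<lambda>m. c * A m) = (\<lambda>_. 0)" by (simp add: dltN_cmult)
  then show "\<exists>N. (dlt ^^ N) (\<lambda>m. c * A m) = (\<lambda>_. 0)" by blast
qed

lemma pol_natmult_aux:
  "(dlt ^^ N) A = (\<lambda>_. 0) \<Longrightarrow> (dlt ^^ Suc N) (\<lambda>m. of_nat m * A m) = (\<lambda>_. 0::'a::comm_ring_1)"
proof (induction N arbitrary: A)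
  case 0
  then show ?case by (simp add: dlt_def)
next
  case (Suc N)
  have l: "dlt (\<lambda>m. of_nat m * A m) = (\<lambda>m. of_nat m * dlt A m + A (Suc m))"
    by (rule ext) (simp add: dlt_def algebra_simps)
  have h1: "(dlt ^^ N) (dlt A) = (\<lambda>_. 0)" using Suc.prems by (simp add: funpow_Suc_right del: funpow.simps)
  have "(dlt ^^ Suc (Suc N)) (\<lambda>m. of_nat m * A m) = (dlt ^^ Suc N) (dlt (\<lambda>m. of_nat m * A m))"
    by (simp only: funpow_Suc_right o_apply)
  also have "\<dots> = (\<lambda>m. (dlt ^^ Suc N) (\<lambda>m. of_nat m * dlt A m) m + (dlt ^^ Suc N) (\<lambda>m. A (Suc m)) m)"
    unfolding l by (rule dltN_add)
  also have "\<dots> = (\<lambda>_. 0)"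
    using Suc.IH[OF h1] Suc.prems by (simp add: dltN_shift del: funpow.simps)
  finally show ?case .
qed

lemma pol_natmult: "pol A \<Longrightarrow> pol (\<lambda>m. of_nat m * A m :: 'a::comm_ring_1)"
  unfolding pol_def using pol_natmult_aux by blast

lemma pol_shift:
  fixes S :: "int \<Rightarrow> 'a::ab_group_add \<Rightarrow> 'a"
  assumes comp: "\<And>k l x. S k (S l x) = S (k + l) x"
    and dif: "\<And>k x y. S k (x - y) = S k x - S k y"
    and nl: "nilp (\<lambda>x. S (-1) x - x) F"
  shows "pol (\<lambda>m. S (- int m) F)"
proof -
  define D where "D = (\<lambda>x. S (-1) x - x)"
  have S0: "S k 0 = 0" for k using dif[of k 0 0] by simp
  have key: "(dlt ^^ n) (\<lambda>m. S (- int m) G) = (\<lambda>m. S (- int m) ((D ^^ n) G))" for n G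
  proof (induction n arbitrary: G)
    case 0 then show ?case by simp
  next
    case (Suc n)
    have "dlt (\<lambda>m. S (- int m) G) = (\<lambda>m. S (- int m) (D G))"
      by (rule ext) (simp add: dlt_def D_def dif comp algebra_simps)
    then show ?case
      by (simp only: funpow_Suc_right o_apply Suc.IH)
  qed
  obtain N where "(D ^^ N) F = 0" using nl unfolding nilp_def D_def by blast
  then show ?thesis unfolding pol_def using key[of N F] S0 by auto
qed

definition sub :: "MM set \<Rightarrow> bool" where
  "sub W \<longleftrightarrow> 0 \<in> W \<and> (\<forall>x\<in>W. \<forall>y\<in>W. x + y \<in> W) \<and> (\<forall>c. \<forall>x\<in>W. ee c * x \<in> W)"

lemma subD: assumes "sub W"
  shows "0 \<in> W" "x \<in> W \<Longrightarrow> y \<in> W \<Longrightarrow> x + y \<in> W" "x \<in> W \<Longrightarrow> ee c * x \<in> W"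
  using assms unfolding sub_def by auto

lemma sub_diff: assumes "sub W" "x \<in> W" "y \<in> W" shows "x - y \<in> W"
proof -
  have "ee (-1) * y \<in> W" using subD(3)[OF assms(1) assms(3)] .
  then have "x + ee (-1) * y \<in> W" using subD(2)[OF assms(1) assms(2)] by blast
  then show ?thesis by (simp add: ee_uminus)
qed

definition Ecw :: "complex \<Rightarrow> (nat \<Rightarrow> MM) \<Rightarrow> nat \<Rightarrow> MM" where
  "Ecw a u = (\<lambda>m. u (Suc m) - ee a * u m)"

lemma Ecw_good: "sub W \<Longrightarrow> \<forall>m. u m \<in> W \<Longrightarrow> \<forall>m. Ecw a u m \<in> W"
  unfolding Ecw_def by (auto intro!: sub_diff subD(3))

lemma Ecw_comm: "Ecw a (Ecw b u) = Ecw b (Ecw a u)"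
  unfolding Ecw_def by (rule ext) (simp add: algebra_simps)

lemma EcwN_comm: "(Ecw a ^^ N) (Ecw b u) = Ecw b ((Ecw a ^^ N) u)"
  by (induction N) (simp_all add: Ecw_comm)

lemma Ecw_add: "Ecw a (\<lambda>m. u m + v m) = (\<lambda>m. Ecw a u m + Ecw a v m)"
  unfolding Ecw_def by (rule ext) (simp add: algebra_simps)

lemma Ecw_zero: "Ecw a (\<lambda>_. 0) = (\<lambda>_. 0)"
  unfolding Ecw_def by simp

lemma EcwN_zero: "(Ecw a ^^ n) (\<lambda>_. 0) = (\<lambda>_. 0)"
  by (induction n) (simp_all add: Ecw_zero)

lemma Inv:
  assumes ab: "a \<noteq> b" and W: "sub W"
  shows "(Ecw a ^^ N) u = (\<lambda>_. 0) \<Longrightarrow> \<forall>m. Ecw b u m \<in> W \<Longrightarrow> \<forall>m. u m \<in> W"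
proof (induction N arbitrary: u)
  case 0 then show ?case using subD(1)[OF W] by simp
next
  case (Suc N)
  define u' where "u' = Ecw a u"
  have "(Ecw a ^^ N) u' = (\<lambda>_. 0)" using Suc.prems(1) unfolding u'_def
    by (simp add: funpow_Suc_right del: funpow.simps)
  moreover have "\<forall>m. Ecw b u' m \<in> W"
    unfolding u'_def Ecw_comm[of b a] using Ecw_good[OF W Suc.prems(2)] .
  ultimately have g: "\<forall>m. u' m \<in> W" using Suc.IH by blast
  show ?case
  proof
    fix m
    have "Ecw b u m - u' m \<in> W" using sub_diff[OF W] Suc.prems(2) g by blast
    then have "ee (1 / (a - b)) * (Ecw b u m - u' m) \<in> W" using subD(3)[OF W] by blast
    moreover have "Ecw b u m - u' m = ee (a - b) * u m"
      unfolding u'_def Ecw_def by (simp add: ee_diff algebra_simps)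
    ultimately have "ee (1 / (a - b)) * ee (a - b) * u m \<in> W" by (simp add: mult.assoc)
    then show "u m \<in> W" using ab by (simp add: ee_mult[symmetric])
  qed
qed

lemma SepE:
  assumes ab: "a \<noteq> b" and W: "sub W"
  shows "(Ecw a ^^ N) u = (\<lambda>_. 0) \<Longrightarrow> (Ecw b ^^ K) v = (\<lambda>_. 0) \<Longrightarrow> \<forall>m. u m + v m \<in> W
     \<Longrightarrow> \<forall>m. u m \<in> W"
proof (induction K arbitrary: u v)
  case 0 then show ?case by simp
next
  case (Suc K)
  have 1: "(Ecw a ^^ N) (Ecw b u) = (\<lambda>_. 0)" using Suc.prems(1) by (simp add: EcwN_comm Ecw_zero)
  have 2: "(Ecw b ^^ K) (Ecw b v) = (\<lambda>_. 0)" using Suc.prems(2)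
    by (simp add: funpow_Suc_right del: funpow.simps)
  have 3: "\<forall>m. Ecw b u m + Ecw b v m \<in> W"
    using Ecw_good[OF W Suc.prems(3), of b] by (simp add: Ecw_add)
  have "\<forall>m. Ecw b u m \<in> W" using Suc.IH[OF 1 2 3] .
  then show ?case using Inv[OF ab W Suc.prems(1)] by blast
qed

lemma EcwN_exp: "(Ecw a ^^ n) (\<lambda>m. ee (a ^ m) * A m) = (\<lambda>m. ee (a ^ (m + n)) * (dlt ^^ n) A m)"
proof (induction n)
  case 0 then show ?case by simp
next
  case (Suc n)
  have "(Ecw a ^^ Suc n) (\<lambda>m. ee (a ^ m) * A m) = Ecw a ((Ecw a ^^ n) (\<lambda>m. ee (a ^ m) * A m))"
    by simp
  also have "\<dots> = Ecw a (\<lambda>m. ee (a ^ (m + n)) * (dlt ^^ n) A m)" by (simp only: Suc)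
  also have "\<dots> = (\<lambda>m. ee (a ^ (m + Suc n)) * (dlt ^^ Suc n) A m)"
    unfolding Ecw_def by (rule ext) (simp add: dlt_def ee_mult algebra_simps)
  finally show ?case .
qed

lemma Sep:
  assumes ab: "a \<noteq> b" and a0: "a \<noteq> 0" and W: "sub W" and pA: "pol A" and pB: "pol B"
    and h: "\<And>m. ee (a ^ m) * A m + ee (b ^ m) * B m \<in> W"
  shows "A m \<in> W"
proof -
  obtain N where N: "(dlt ^^ N) A = (\<lambda>_. 0)" using pA unfolding pol_def by blast
  obtain K where K: "(dlt ^^ K) B = (\<lambda>_. 0)" using pB unfolding pol_def by blast
  have u: "(Ecw a ^^ N) (\<lambda>m. ee (a ^ m) * A m) = (\<lambda>_. 0)" by (simp add: EcwN_exp N)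
  have v: "(Ecw b ^^ K) (\<lambda>m. ee (b ^ m) * B m) = (\<lambda>_. 0)" by (simp add: EcwN_exp K)
  have "\<forall>m. ee (a ^ m) * A m \<in> W" using SepE[OF ab W u v] h by blast
  then have "ee ((1 / a) ^ m) * (ee (a ^ m) * A m) \<in> W" using subD(3)[OF W] by blast
  then show ?thesis using a0 by (simp add: mult.assoc[symmetric] ee_mult[symmetric] power_mult_distrib[symmetric])
qed

lemma Sep2:
  assumes ab: "a \<noteq> b" and a0: "a \<noteq> 0" and b0: "b \<noteq> 0" and W: "sub W"
    and pA: "pol A" and pB: "pol B"
    and h: "\<And>m. ee (a ^ m) * A m + ee (b ^ m) * B m \<in> W"
  shows "A m \<in> W" "B m \<in> W"
proof -
  show "A m \<in> W" by (rule Sep[OF ab a0 W pA pB h])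
  have h': "ee (b ^ m) * B m + ee (a ^ m) * A m \<in> W" for m using h[of m] by (simp add: add.commute)
  show "B m \<in> W" by (rule Sep[OF ab[symmetric] b0 W pB pA h'])
qed

lemma pol_sy1: "pol (\<lambda>m. sy1 (- int m) G)"
  by (rule pol_shift[OF sy1_sy1 rh_diff[OF rh_sy1] nil_sy1])
lemma pol_sy2: "pol (\<lambda>m. sy2 (- int m) G)"
  by (rule pol_shift[OF sy2_sy2 rh_diff[OF rh_sy2] nil_sy2])

lemma cancel_ee: assumes W: "sub W" "c \<noteq> 0" "ee c * x \<in> W" shows "x \<in> W"
proof -
  have "ee (1 / c) * (ee c * x) \<in> W" using subD(3)[OF W(1) W(3)] .
  then show ?thesis using W(2) by (simp add: mult.assoc[symmetric] ee_mult[symmetric])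
qed

lemma stepA:
  assumes W: "sub W" and clo: "\<forall>g x. x \<in> W \<longrightarrow> tensor_act l1 e1 s1 l2 e2 s2 g x \<in> W"
    and ab: "l1 \<noteq> l2" and nz: "l1 \<noteq> 0" "l2 \<noteq> 0" "s1 \<noteq> 0" "s2 \<noteq> 0" and F: "F \<in> W"
  shows "X1M * F \<in> W" "X2M * F \<in> W" "Y1M * F \<in> W" "Y2M * F \<in> W"
    "sx1 (-1) F \<in> W" "sx2 (-1) F \<in> W" "sy1 (-1) (sx1 (-1) F) \<in> W" "sy2 (-1) (sx2 (-1) F) \<in> W"
proof -
  have cl: "tensor_act l1 e1 s1 l2 e2 s2 g x \<in> W" if "x \<in> W" for g x using clo that by blast
  have hH: "ee (l1 ^ m) * (X1M * sy1 (- int m) F) + ee (l2 ^ m) * (X2M * sy2 (- int m) F) \<in> W" for m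
    using cl[OF F, of "H (int m)"] unfolding T_H by (simp add: mult.assoc)
  have pH1: "pol (\<lambda>m. X1M * sy1 (- int m) F)" by (rule pol_cmult[OF pol_sy1])
  have pH2: "pol (\<lambda>m. X2M * sy2 (- int m) F)" by (rule pol_cmult[OF pol_sy2])
  show "X1M * F \<in> W" using Sep2(1)[OF ab nz(1,2) W pH1 pH2 hH, of 0] by (simp add: sy1_0)
  show "X2M * F \<in> W" using Sep2(2)[OF ab nz(1,2) W pH1 pH2 hH, of 0] by (simp add: sy2_0)
  define A where "A = (\<lambda>m::nat. Y1M * sy1 (- int m) F - of_nat m * (X1M * sy1 (- int m) F)
      + of_nat m * (ee e1 * sy1 (- int m) F))"
  define B where "B = (\<lambda>m::nat. Y2M * sy2 (- int m) F - of_nat m * (X2M * sy2 (- int m) F)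
      + of_nat m * (ee e2 * sy2 (- int m) F))"
  have hL: "ee (l1 ^ m) * A m + ee (l2 ^ m) * B m \<in> W" for m
    using cl[OF F, of "L (int m)"] unfolding T_L A_def B_def
    by (simp add: ee_mult ee_of_nat algebra_simps)
  have pA: "pol A" unfolding A_def
    by (intro pol_add pol_diff pol_natmult pol_cmult pol_sy1)
  have pB: "pol B" unfolding B_def
    by (intro pol_add pol_diff pol_natmult pol_cmult pol_sy2)
  show "Y1M * F \<in> W" using Sep2(1)[OF ab nz(1,2) W pA pB hL, of 0] by (simp add: A_def sy1_0)
  show "Y2M * F \<in> W" using Sep2(2)[OF ab nz(1,2) W pA pB hL, of 0] by (simp add: B_def sy2_0)
  have hI: "ee (l1 ^ m) * (ee s1 * sy1 (- int m) (sx1 (-1) F))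
     + ee (l2 ^ m) * (ee s2 * sy2 (- int m) (sx2 (-1) F)) \<in> W" for m
    using cl[OF F, of "I (int m)"] unfolding T_I by (simp add: ee_mult mult.assoc)
  have pI1: "pol (\<lambda>m. ee s1 * sy1 (- int m) (sx1 (-1) F))" by (rule pol_cmult[OF pol_sy1])
  have pI2: "pol (\<lambda>m. ee s2 * sy2 (- int m) (sx2 (-1) F))" by (rule pol_cmult[OF pol_sy2])
  show "sx1 (-1) F \<in> W"
    using Sep2(1)[OF ab nz(1,2) W pI1 pI2 hI, of 0] cancel_ee[OF W nz(3)] by (simp add: sy1_0)
  show "sx2 (-1) F \<in> W"
    using Sep2(2)[OF ab nz(1,2) W pI1 pI2 hI, of 0] cancel_ee[OF W nz(4)] by (simp add: sy2_0)
  show "sy1 (-1) (sx1 (-1) F) \<in> W"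
    using Sep2(1)[OF ab nz(1,2) W pI1 pI2 hI, of 1] cancel_ee[OF W nz(3)] by simp
  show "sy2 (-1) (sx2 (-1) F) \<in> W"
    using Sep2(2)[OF ab nz(1,2) W pI1 pI2 hI, of 1] cancel_ee[OF W nz(4)] by simp
qed

lemma GEN:
  fixes Q :: "'a::comm_ring_1 poly \<Rightarrow> bool"
  assumes add: "\<And>p q. Q p \<Longrightarrow> Q q \<Longrightarrow> Q (p + q)"
    and mul: "\<And>p q. Q p \<Longrightarrow> Q q \<Longrightarrow> Q (p * q)"
    and c: "\<And>a. Q [:a:]" and v: "Q [:0, 1:]"
  shows "Q p"
proof (induction p)
  case 0 then show ?case using c[of 0] by simp
next
  case (pCons a p)
  have "pCons a p = [:a:] + [:0, 1:] * p" by simp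
  then show ?case using add[OF c mul[OF v pCons.IH]] by simp
qed

lemma ideal:
  assumes W: "sub W"
    and x1: "\<And>F. F \<in> W \<Longrightarrow> X1M * F \<in> W" and x2: "\<And>F. F \<in> W \<Longrightarrow> X2M * F \<in> W"
    and y1: "\<And>F. F \<in> W \<Longrightarrow> Y1M * F \<in> W" and y2: "\<And>F. F \<in> W \<Longrightarrow> Y2M * F \<in> W"
  shows "\<forall>F\<in>W. P * F \<in> W"
proof -
  define Q where "Q = (\<lambda>P::MM. \<forall>F\<in>W. P * F \<in> W)"
  have Qadd: "Q p \<Longrightarrow> Q q \<Longrightarrow> Q (p + q)" for p q
    unfolding Q_def by (simp add: distrib_right subD(2)[OF W])
  have Qmul: "Q p \<Longrightarrow> Q q \<Longrightarrow> Q (p * q)" for p q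
    unfolding Q_def by (simp add: mult.assoc)
  have Q1: "Q [:[:[:a:]:]:]" for a :: C1
  proof (rule GEN[where Q = "\<lambda>a. Q [:[:[:a:]:]:]"])
    show "Q [:[:[:p + q:]:]:]" if "Q [:[:[:p:]:]:]" "Q [:[:[:q:]:]:]" for p q
      using Qadd[OF that] by simp
    show "Q [:[:[:p * q:]:]:]" if "Q [:[:[:p:]:]:]" "Q [:[:[:q:]:]:]" for p q :: C1
      using Qmul[OF that] by (simp add: mult.commute)
    show "Q [:[:[:[:c:]:]:]:]" for c using subD(3)[OF W] unfolding Q_def ee_def by blast
    show "Q [:[:[:[:0, 1:]:]:]:]" using x1 unfolding Q_def X1M_def by blast
  qed
  have Q2: "Q [:[:a:]:]" for a :: C2
  proof (rule GEN[where Q = "\<lambda>a. Q [:[:a:]:]"])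
    show "Q [:[:p + q:]:]" if "Q [:[:p:]:]" "Q [:[:q:]:]" for p q
      using Qadd[OF that] by simp
    show "Q [:[:p * q:]:]" if "Q [:[:p:]:]" "Q [:[:q:]:]" for p q :: C2
      using Qmul[OF that] by (simp add: mult.commute)
    show "Q [:[:[:c:]:]:]" for c by (rule Q1)
    show "Q [:[:[:0, 1:]:]:]" using y1 unfolding Q_def Y1M_def by blast
  qed
  have Q3: "Q [:a:]" for a :: C3
  proof (rule GEN[where Q = "\<lambda>a. Q [:a:]"])
    show "Q [:p + q:]" if "Q [:p:]" "Q [:q:]" for p q
      using Qadd[OF that] by simp
    show "Q [:p * q:]" if "Q [:p:]" "Q [:q:]" for p q :: C3
      using Qmul[OF that] by (simp add: mult.commute)
    show "Q [:[:c:]:]" for c by (rule Q2)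
    show "Q [:[:0, 1:]:]" using x2 unfolding Q_def X2M_def by blast
  qed
  have "Q P"
  proof (rule GEN[where Q = Q])
    show "Q (p + q)" if "Q p" "Q q" for p q using Qadd[OF that] .
    show "Q (p * q)" if "Q p" "Q q" for p q using Qmul[OF that] .
    show "Q [:c:]" for c by (rule Q3)
    show "Q [:0, 1:]" using y2 unfolding Q_def Y2M_def by blast
  qed
  then show ?thesis unfolding Q_def .
qed

lemma extr_lem:
  fixes D :: "MM \<Rightarrow> MM"
  shows "G \<noteq> 0 \<Longrightarrow> (D ^^ N) G = 0 \<Longrightarrow> \<exists>k. (D ^^ k) G \<noteq> 0 \<and> D ((D ^^ k) G) = 0"
proof (induction N)
  case 0 then show ?case by simp
next
  case (Suc N)
  show ?case
  proof (cases "(D ^^ N) G = 0")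
    case True then show ?thesis using Suc.IH Suc.prems(1) by blast
  next
    case False then show ?thesis using Suc.prems(2) by auto
  qed
qed

lemma funpow_closed: "(\<And>x. x \<in> W \<Longrightarrow> D x \<in> W) \<Longrightarrow> G \<in> W \<Longrightarrow> (D ^^ k) G \<in> W"
  by (induction k) auto

lemma funpow_fixed:
  "(\<And>x. f (D x) = D (f x)) \<Longrightarrow> f G = G \<Longrightarrow> f ((D ^^ k) G) = (D ^^ k) G"
  by (induction k) auto

lemma kill:
  fixes D :: "MM \<Rightarrow> MM"
  assumes clo: "\<forall>x\<in>W. D x \<in> W" and G: "G \<in> W" "G \<noteq> 0" and nl: "(D ^^ N) G = 0"
    and preso: "\<forall>f\<in>Fs. (\<forall>x. f (D x) = D (f x)) \<and> f G = G"
  shows "\<exists>G'. G' \<in> W \<and> G' \<noteq> 0 \<and> D G' = 0 \<and> (\<forall>f\<in>Fs. f G' = G')"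
proof -
  have cl: "D x \<in> W" if "x \<in> W" for x using clo that by blast
  have pres: "(\<forall>x. f (D x) = D (f x)) \<and> f G = G" if "f \<in> Fs" for f using preso that by blast
  obtain k where k: "(D ^^ k) G \<noteq> 0" "D ((D ^^ k) G) = 0" using extr_lem[OF G(2) nl] by blast
  have inW: "(D ^^ k) G \<in> W" using funpow_closed[of W D, OF cl G(1)] by blast
  have fx: "\<forall>f\<in>Fs. f ((D ^^ k) G) = (D ^^ k) G"
  proof
    fix f assume "f \<in> Fs"
    then have "\<forall>x. f (D x) = D (f x)" "f G = G" using pres by auto
    then show "f ((D ^^ k) G) = (D ^^ k) G" using funpow_fixed[of f D G k] by simp
  qed
  show ?thesis using inW k fx by blast
qed

definition DY1' :: "MM \<Rightarrow> MM" where "DY1' G = sy1 (-1) (sx1 (-1) G) - sx1 (-1) G"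
definition DY2' :: "MM \<Rightarrow> MM" where "DY2' G = sy2 (-1) (sx2 (-1) G) - sx2 (-1) G"
definition DX1 :: "MM \<Rightarrow> MM" where "DX1 G = sx1 (-1) G - G"
definition DX2 :: "MM \<Rightarrow> MM" where "DX2 G = sx2 (-1) G - G"

lemma DY1'_pow: "(DY1' ^^ n) G = sx1 (- int n) (((\<lambda>x. sy1 (-1) x - x) ^^ n) G)"
proof (induction n)
  case 0 then show ?case by (simp add: sx1_0)
next
  case (Suc n)
  show ?case
  proof -
    have e: "DY1' (sx1 k H) = sx1 (k - 1) (sy1 (-1) H - H)" for k H
      unfolding DY1'_def
      by (simp only: sx1_sx1 com_y1x1 rh_diff[OF rh_sx1, symmetric]) (simp add: algebra_simps)
    have "(DY1' ^^ Suc n) G = DY1' ((DY1' ^^ n) G)" by simp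
    also have "\<dots> = sx1 (- int n - 1) (((\<lambda>x. sy1 (-1) x - x) ^^ Suc n) G)"
      unfolding Suc e by simp
    also have "- int n - 1 = - int (Suc n)" by simp
    finally show ?thesis .
  qed
qed

lemma DY2'_pow: "(DY2' ^^ n) G = sx2 (- int n) (((\<lambda>x. sy2 (-1) x - x) ^^ n) G)"
proof (induction n)
  case 0 then show ?case by (simp add: sx2_0)
next
  case (Suc n)
  show ?case
  proof -
    have e: "DY2' (sx2 k H) = sx2 (k - 1) (sy2 (-1) H - H)" for k H
      unfolding DY2'_def
      by (simp only: sx2_sx2 com_y2x2 rh_diff[OF rh_sx2, symmetric]) (simp add: algebra_simps)
    have "(DY2' ^^ Suc n) G = DY2' ((DY2' ^^ n) G)" by simp
    also have "\<dots> = sx2 (- int n - 1) (((\<lambda>x. sy2 (-1) x - x) ^^ Suc n) G)"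
      unfolding Suc e by simp
    also have "- int n - 1 = - int (Suc n)" by simp
    finally show ?thesis .
  qed
qed

lemma nilpE: "nilp D x \<Longrightarrow> \<exists>N. (D ^^ N) x = 0" unfolding nilp_def .

lemma G7': "shc (of_int (-1)) p = (p :: 'a::{idom,ring_char_0} poly) \<Longrightarrow> p = [:coeff p 0:]"
  using G7[of p] by simp

lemma invariant_const:
  assumes "sy2 (-1) G = G" "sx2 (-1) G = G" "sy1 (-1) G = G" "sx1 (-1) G = G"
  shows "\<exists>c. G = ee c"
proof -
  define g3 where "g3 = coeff G 0"
  have G3: "G = [:g3:]" using G7'[of G] assms(1) unfolding sy2_def g3_def by simp
  have "sx2 (-1) G = [:shc (of_int (-1)) g3:]" unfolding G3 sx2_def by (simp add: map_poly_const)
  then have "shc (of_int (-1)) g3 = g3" using assms(2) G3 by simp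
  then have g3: "g3 = [:coeff g3 0:]" by (rule G7')
  define g2 where "g2 = coeff g3 0"
  have G2: "G = [:[:g2:]:]" using G3 g3 g2_def by simp
  have "sy1 (-1) G = [:[:shc (of_int (-1)) g2:]:]" unfolding G2 sy1_def by (simp add: map_poly_const)
  then have "shc (of_int (-1)) g2 = g2" using assms(3) G2 by simp
  then have g2: "g2 = [:coeff g2 0:]" by (rule G7')
  define g1 where "g1 = coeff g2 0"
  have G1: "G = [:[:[:g1:]:]:]" using G2 g2 g1_def by simp
  have "sx1 (-1) G = [:[:[:shc (of_int (-1)) g1:]:]:]" unfolding G1 sx1_def by (simp add: map_poly_const)
  then have "shc (of_int (-1)) g1 = g1" using assms(4) G1 by simp
  then have g1: "g1 = [:coeff g1 0:]" by (rule G7')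
  have "G = ee (coeff g1 0)" unfolding ee_def using G1 g1 by simp
  then show ?thesis by blast
qed

lemma irr_main:
  assumes W: "sub W" and cl: "\<forall>g x. x \<in> W \<longrightarrow> tensor_act l1 e1 s1 l2 e2 s2 g x \<in> W"
    and ab: "l1 \<noteq> l2" and nz: "l1 \<noteq> 0" "l2 \<noteq> 0" "s1 \<noteq> 0" "s2 \<noteq> 0"
    and F0: "F0 \<in> W" "F0 \<noteq> 0"
  shows "W = UNIV"
proof -
  note A = stepA[OF W cl ab nz]
  have idl: "\<forall>F\<in>W. P * F \<in> W" for P by (rule ideal[OF W A(1) A(2) A(3) A(4)])
  have clY1: "\<forall>x\<in>W. DY1' x \<in> W"
  proof
    fix x assume that: "x \<in> W"
    show "DY1' x \<in> W" unfolding DY1'_def using sub_diff[OF W A(7)[OF that] A(5)[OF that]] .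
  qed
  obtain N1 where N1: "(((\<lambda>x. sy1 (-1) x - x)) ^^ N1) F0 = 0" using nilpE[OF nil_sy1] by blast
  have "(DY1' ^^ N1) F0 = 0" unfolding DY1'_pow N1 using rhD(1)[OF rh_sx1] by simp
  then obtain G1 where G1: "G1 \<in> W" "G1 \<noteq> 0" "DY1' G1 = 0"
    using kill[OF clY1 F0, where N=N1 and Fs="{}"] by auto
  have "sx1 (-1) (sy1 (-1) G1 - G1) = 0" using G1(3) unfolding DY1'_def
    by (simp add: rh_diff[OF rh_sx1] com_y1x1)
  then have i1: "sy1 (-1) G1 = G1" using sx1_inj by fastforce
  have clY2: "\<forall>x\<in>W. DY2' x \<in> W"
  proof
    fix x assume that: "x \<in> W"
    show "DY2' x \<in> W" unfolding DY2'_def using sub_diff[OF W A(8)[OF that] A(6)[OF that]] .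
  qed
  obtain N2 where N2: "(((\<lambda>x. sy2 (-1) x - x)) ^^ N2) G1 = 0" using nilpE[OF nil_sy2] by blast
  have "(DY2' ^^ N2) G1 = 0" unfolding DY2'_pow N2 using rhD(1)[OF rh_sx2] by simp
  moreover have "(\<forall>x. sy1 (-1) (DY2' x) = DY2' (sy1 (-1) x)) \<and> sy1 (-1) G1 = G1"
    using i1 unfolding DY2'_def by (simp add: rh_diff[OF rh_sy1] com_y2y1 com_x2y1)
  ultimately obtain G2 where G2: "G2 \<in> W" "G2 \<noteq> 0" "DY2' G2 = 0" "sy1 (-1) G2 = G2"
    using kill[OF clY2 G1(1,2), where N=N2 and Fs="{sy1 (-1)}"] by auto
  have "sx2 (-1) (sy2 (-1) G2 - G2) = 0" using G2(3) unfolding DY2'_def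
    by (simp add: rh_diff[OF rh_sx2] com_y2x2)
  then have i2: "sy2 (-1) G2 = G2" using sx2_inj by fastforce
  have clX1: "\<forall>x\<in>W. DX1 x \<in> W"
  proof
    fix x assume that: "x \<in> W"
    show "DX1 x \<in> W" unfolding DX1_def using sub_diff[OF W A(5)[OF that] that] .
  qed
  obtain N3 where N3: "(DX1 ^^ N3) G2 = 0" using nilpE[OF nil_sx1, of "-1" G2]
    unfolding DX1_def[abs_def] by blast
  have "(\<forall>x. sy1 (-1) (DX1 x) = DX1 (sy1 (-1) x)) \<and> sy1 (-1) G2 = G2"
    using G2(4) unfolding DX1_def by (simp add: rh_diff[OF rh_sy1] com_y1x1)
  moreover have "(\<forall>x. sy2 (-1) (DX1 x) = DX1 (sy2 (-1) x)) \<and> sy2 (-1) G2 = G2"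
    using i2 unfolding DX1_def by (simp add: rh_diff[OF rh_sy2] com_y2x1)
  ultimately obtain G3 where G3: "G3 \<in> W" "G3 \<noteq> 0" "DX1 G3 = 0" "sy1 (-1) G3 = G3" "sy2 (-1) G3 = G3"
    using kill[OF clX1 G2(1,2) N3, where Fs="{sy1 (-1), sy2 (-1)}"] by auto
  have i3: "sx1 (-1) G3 = G3" using G3(3) unfolding DX1_def by simp
  have clX2: "\<forall>x\<in>W. DX2 x \<in> W"
  proof
    fix x assume that: "x \<in> W"
    show "DX2 x \<in> W" unfolding DX2_def using sub_diff[OF W A(6)[OF that] that] .
  qed
  obtain N4 where N4: "(DX2 ^^ N4) G3 = 0" using nilpE[OF nil_sx2, of "-1" G3]
    unfolding DX2_def[abs_def] by blast
  have "(\<forall>x. sy1 (-1) (DX2 x) = DX2 (sy1 (-1) x)) \<and> sy1 (-1) G3 = G3"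
    using G3(4) unfolding DX2_def by (simp add: rh_diff[OF rh_sy1] com_x2y1)
  moreover have "(\<forall>x. sy2 (-1) (DX2 x) = DX2 (sy2 (-1) x)) \<and> sy2 (-1) G3 = G3"
    using G3(5) unfolding DX2_def by (simp add: rh_diff[OF rh_sy2] com_y2x2)
  moreover have "(\<forall>x. sx1 (-1) (DX2 x) = DX2 (sx1 (-1) x)) \<and> sx1 (-1) G3 = G3"
    using i3 unfolding DX2_def by (simp add: rh_diff[OF rh_sx1] com_x2x1)
  ultimately obtain G4 where G4: "G4 \<in> W" "G4 \<noteq> 0" "DX2 G4 = 0" "sy1 (-1) G4 = G4"
      "sy2 (-1) G4 = G4" "sx1 (-1) G4 = G4"
    using kill[OF clX2 G3(1,2) N4, where Fs="{sy1 (-1), sy2 (-1), sx1 (-1)}"] by auto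
  have i4: "sx2 (-1) G4 = G4" using G4(3) unfolding DX2_def by simp
  obtain c where c: "G4 = ee c" using invariant_const[OF G4(5) i4 G4(4) G4(6)] by blast
  have c0: "c \<noteq> 0" using G4(2) c by (cases "c = 0") simp_all
  have one: "1 \<in> W" using subD(3)[OF W G4(1), of "1/c"] c c0 by (simp add: ee_mult[symmetric])
  show ?thesis
  proof (rule set_eqI, rule iffI)
    fix P :: MM
    show "P \<in> W" using idl[of P] one by auto
  qed simp
qed

definition tau :: "int \<Rightarrow> int \<Rightarrow> MM \<Rightarrow> MM" where
  "tau s t F = sx1 s (sy1 t (sx2 (-s) (sy2 (-t) F)))"

lemma rh_tau: "rh (tau s t)"
proof -
  have "rh (\<lambda>F. sx1 s (sy1 t (sx2 (-s) (sy2 (-t) F))))"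
    using rh_comp[OF rh_sx1 rh_comp[OF rh_sy1 rh_comp[OF rh_sx2 rh_sy2]]] .
  moreover have "tau s t = (\<lambda>F. sx1 s (sy1 t (sx2 (-s) (sy2 (-t) F))))"
    by (rule ext) (simp add: tau_def)
  ultimately show ?thesis by simp
qed

lemmas comms = com_y2x2 com_y2y1 com_y2x1 com_x2y1 com_x2x1 com_y1x1 sx1_sx1 sy1_sy1 sx2_sx2 sy2_sy2

lemma tau_sx1: "tau s t (sx1 k F) = sx1 k (tau s t F)"
  unfolding tau_def by (simp add: comms add.commute)
lemma tau_sy1: "tau s t (sy1 k F) = sy1 k (tau s t F)"
  unfolding tau_def by (simp add: comms add.commute)
lemma tau_sx2: "tau s t (sx2 k F) = sx2 k (tau s t F)"
  unfolding tau_def by (simp add: comms add.commute)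
lemma tau_sy2: "tau s t (sy2 k F) = sy2 k (tau s t F)"
  unfolding tau_def by (simp add: comms add.commute)

lemma tau_ee[simp]: "tau s t (ee c) = ee c" unfolding tau_def by simp

lemmas rhs = rhD(3)[OF rh_sx1] rhD(3)[OF rh_sy1] rhD(3)[OF rh_sx2] rhD(3)[OF rh_sy2]
  rh_of_int[OF rh_sx1] rh_of_int[OF rh_sy1] rh_of_int[OF rh_sx2] rh_of_int[OF rh_sy2]
  rh_uminus[OF rh_sx1] rh_uminus[OF rh_sy1] rh_uminus[OF rh_sx2] rh_uminus[OF rh_sy2]
  rh_diff[OF rh_sx1] rh_diff[OF rh_sy1] rh_diff[OF rh_sx2] rh_diff[OF rh_sy2]

lemma tau_X1: "tau s t X1M = X1M + of_int s" unfolding tau_def by (simp add: rhs)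
lemma tau_Y1: "tau s t Y1M = Y1M + of_int t" unfolding tau_def by (simp add: rhs)
lemma tau_X2: "tau s t X2M = X2M - of_int s" unfolding tau_def by (simp add: rhs)
lemma tau_Y2: "tau s t Y2M = Y2M - of_int t" unfolding tau_def by (simp add: rhs)

definition WR :: "MM set" where "WR = {F. \<forall>s t. tau s t F = F}"

lemma WR_y: assumes "F \<in> WR" shows "sy2 k F = sy1 k F"
proof -
  have "tau 0 k F = F" using assms unfolding WR_def by blast
  then have e: "sy1 k (sy2 (-k) F) = F" unfolding tau_def by (simp add: sx1_0 sx2_0)
  have "sy2 k F = sy2 k (sy1 k (sy2 (-k) F))" using e by simp
  also have "\<dots> = sy1 k F" by (simp add: comms sy2_0)
  finally show ?thesis .
qed

lemma tau_mult: "tau s t (x * y) = tau s t x * tau s t y" by (rule rhD(4)[OF rh_tau])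
lemma tau_add: "tau s t (x + y) = tau s t x + tau s t y" by (rule rhD(3)[OF rh_tau])
lemma tau_diff: "tau s t (x - y) = tau s t x - tau s t y" by (rule rh_diff[OF rh_tau])
lemma tau_of_int: "tau s t (of_int k) = of_int k" by (rule rh_of_int[OF rh_tau])

lemma WR_closed:
  assumes F: "F \<in> WR"
  shows "tensor_act l e1 s1 l e2 s2 g F \<in> WR"
proof -
  have fx: "tau s t F = F" for s t using F unfolding WR_def by blast
  have y: "sy2 k F = sy1 k F" for k using WR_y[OF F] .
  show ?thesis
  proof (cases g)
    case (L m)
    have "tensor_act l e1 s1 l e2 s2 g F = ee (l powi m) *
       ((Y1M - of_int m * X1M + ee (of_int m * e1)) + (Y2M - of_int m * X2M + ee (of_int m * e2)))
       * sy1 (-m) F"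
      unfolding L T_L y by (simp add: algebra_simps)
    moreover have "tau s t (ee (l powi m) *
       ((Y1M - of_int m * X1M + ee (of_int m * e1)) + (Y2M - of_int m * X2M + ee (of_int m * e2)))
       * sy1 (-m) F) = ee (l powi m) *
       ((Y1M - of_int m * X1M + ee (of_int m * e1)) + (Y2M - of_int m * X2M + ee (of_int m * e2)))
       * sy1 (-m) F" for s t
      by (simp add: tau_mult tau_add tau_diff tau_of_int tau_X1 tau_Y1 tau_X2 tau_Y2 tau_sy1 fx
          algebra_simps)
    ultimately show ?thesis unfolding WR_def by simp
  next
    case (H m)
    have "tensor_act l e1 s1 l e2 s2 g F = ee (l powi m) * (X1M + X2M) * sy1 (-m) F"
      unfolding H T_H y by (simp add: algebra_simps)
    moreover have "tau s t (ee (l powi m) * (X1M + X2M) * sy1 (-m) F)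
        = ee (l powi m) * (X1M + X2M) * sy1 (-m) F" for s t
      by (simp add: tau_mult tau_add tau_X1 tau_X2 tau_sy1 fx)
    ultimately show ?thesis unfolding WR_def by simp
  next
    case (I m)
    have "tau s t (tensor_act l e1 s1 l e2 s2 g F) = tensor_act l e1 s1 l e2 s2 g F" for s t
      unfolding I T_I by (simp add: tau_mult tau_add tau_sy1 tau_sy2 tau_sx1 tau_sx2 fx)
    then show ?thesis unfolding WR_def by simp
  next
    case (J m)
    show ?thesis unfolding J T_J WR_def by (simp add: rhD(1)[OF rh_tau])
  qed
qed

lemma WR_sub: "is_submodule (tensor_act l e1 s1 l e2 s2) (\<lambda>c. [:[:[:[:c:]:]:]:]) WR"
  unfolding is_submodule_def
proof (intro conjI ballI allI)
  show "0 \<in> WR" unfolding WR_def by (simp add: rhD(1)[OF rh_tau])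
  show "x + y \<in> WR" if "x \<in> WR" "y \<in> WR" for x y
    using that unfolding WR_def by (simp add: tau_add)
  show "[:[:[:[:c:]:]:]:] * x \<in> WR" if "x \<in> WR" for c x
    using that unfolding WR_def ee_def[symmetric] by (simp add: tau_mult)
  show "tensor_act l e1 s1 l e2 s2 g x \<in> WR" if "x \<in> WR" for g x
    using WR_closed[OF that] .
qed

lemma WR_ne0: "WR \<noteq> {0}"
proof -
  have 1: "1 \<in> WR" unfolding WR_def by (simp add: rhD(2)[OF rh_tau])
  show ?thesis
  proof
    assume a: "WR = {0}"
    have "(1::MM) \<in> {0}" using 1 unfolding a .
    then have "(1::MM) = 0" by (rule singletonD)
    then show False by simp
  qed
qed

lemma WR_neU: "WR \<noteq> UNIV"
proof -
  have "tau 1 0 X1M \<noteq> X1M" unfolding tau_X1 by simp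
  then have "X1M \<notin> WR" unfolding WR_def by blast
  then show ?thesis by blast
qed

lemma ee_fun: "(\<lambda>c. [:[:[:[:c:]:]:]:]) = ee" by (rule ext) (simp add: ee_def)

theorem theorem4p5:
  fixes lam1 lam2 sig1 sig2 eta1 eta2 :: complex
  assumes "lam1 \<noteq> 0" and "lam2 \<noteq> 0" and "sig1 \<noteq> 0" and "sig2 \<noteq> 0"
  shows "irreducible_module (tensor_act lam1 eta1 sig1 lam2 eta2 sig2)
           (\<lambda>c. [:[:[:[:c:]:]:]:]) \<longleftrightarrow> lam1 \<noteq> lam2"
proof
  assume irr: "irreducible_module (tensor_act lam1 eta1 sig1 lam2 eta2 sig2) (\<lambda>c. [:[:[:[:c:]:]:]:])"
  show "lam1 \<noteq> lam2"
  proof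
    assume eq: "lam1 = lam2"
    have "is_submodule (tensor_act lam1 eta1 sig1 lam2 eta2 sig2) (\<lambda>c. [:[:[:[:c:]:]:]:]) WR"
      unfolding eq by (rule WR_sub)
    then have "WR = {0} \<or> WR = UNIV" using irr unfolding irreducible_module_def by blast
    then show False using WR_ne0 WR_neU by blast
  qed
next
  assume ne: "lam1 \<noteq> lam2"
  have U: "(UNIV :: MM set) \<noteq> {0}"
  proof
    assume a: "(UNIV :: MM set) = {0}"
    have "(1::MM) \<in> {0}" unfolding a[symmetric] by simp
    then have "(1::MM) = 0" by (rule singletonD)
    then show False by simp
  qed
  have "W = {0} \<or> W = UNIV"
    if sm: "is_submodule (tensor_act lam1 eta1 sig1 lam2 eta2 sig2) (\<lambda>c. [:[:[:[:c:]:]:]:]) W" for W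
  proof (cases "W = {0}")
    case True then show ?thesis ..
  next
    case False
    have W: "sub W" using sm unfolding is_submodule_def sub_def ee_fun by blast
    have cl: "\<forall>g x. x \<in> W \<longrightarrow> tensor_act lam1 eta1 sig1 lam2 eta2 sig2 g x \<in> W"
      using sm unfolding is_submodule_def by blast
    have "0 \<in> W" using subD(1)[OF W] .
    then obtain F0 where "F0 \<in> W" "F0 \<noteq> 0" using False by blast
    then have "W = UNIV" using irr_main[OF W cl ne assms] by blast
    then show ?thesis ..
  qed
  then show "irreducible_module (tensor_act lam1 eta1 sig1 lam2 eta2 sig2) (\<lambda>c. [:[:[:[:c:]:]:]:])"
    unfolding irreducible_module_def using U by blast
qed

end
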